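(* Let $\mathbf A$ be a t-algebra of type $\tau$ and trace $\mathsf a$, $X$ a set, and $u_1,u_2\in T_\tau(X)$. Then $\alpha(u_1)=\alpha(u_2)$ for every weak homomorphism $\alpha:\mathcal T_\tau(X)\to\mathbf A^{(\mathsf a)}$ if and only if $\beta(u_1)=\beta(u_2)$ for every strong homomorphism $\beta:\mathcal T_\tau(X)\to\mathbf A^{(\mathsf a)}$.
   Context: $\mathbb N=\{1,2,\dots\}$. A thread on a set $A$ is $s=(s_i)_{i\in\mathbb N}\in A^{\mathbb N}$; for a thread $r$ and $a_1,\dots,a_n\in A$, $r[a_1,\dots,a_n]$ is the thread with $i$-th entry $a_i$ for $i\le n$ and $r_i$ for $i>n$. Write $r\equiv_{\mathbb N}s$ iff $\{i:r_i\ne s_i\}$ is finite; $[s]_{\mathbb N}$ is the class of $s$. A trace on $A$ is a nonempty $\mathsf a\subseteq A^{\mathbb N}$ that is a union of $\equiv_{\mathbb N}$-classes. For a set $\tau$ of operation symbols, a t-algebra of type $\tau$ and trace $\mathsf a$ is $\mathbf A=(A,\mathsf a,\sigma^{\mathbf A})_{\sigma\in\tau}$ with $\mathsf a$ a trace on $A$ and each $\sigma^{\mathbf A}:\mathsf a\to A$ an arbitrary map. Clone $\tau$-algebras: algebras $(C,q_n,\mathsf e_i,\sigma)_{n\ge0,i\ge1,\sigma\in\tau}$ ($\mathsf e_i,\sigma$ constants, $q_n$ of arity $n+1$) satisfying (C1) $q_n(\mathsf e_i,x_1,\dots,x_n)=x_i$ ($i\le n$); (C2) $q_n(\mathsf e_j,x_1,\dots,x_n)=\mathsf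 e_j$ ($j>n$); (C3) $q_n(x,\mathsf e_1,\dots,\mathsf e_n)=x$; (C4) $q_n(x,\bar y)=q_k(x,\bar y,\mathsf e_{n+1},\dots,\mathsf e_k)$ ($k>n$); (C5) $q_n(q_n(x,\bar y),\bar z)=q_n(x,q_n(y_1,\bar z),\dots,q_n(y_n,\bar z))$. The full functional clone $\tau$-algebra $\mathbf A^{(\mathsf a)}$ has universe the set $A^{\mathsf a}$ of all maps $\mathsf a\to A$, with $\mathsf e_i(s)=s_i$, $q_n(\varphi,\psi_1,\dots,\psi_n)(s)=\varphi(s[\psi_1(s),\dots,\psi_n(s)])$ and constant $\sigma$ interpreted as $\sigma^{\mathbf A}$; it is a clone $\tau$-algebra. $T_\tau(X)$ ($\tau$-hyperterms over $X$, $X\cap\tau=\emptyset$) is the least set containing $\mathsf e_1,\mathsf e_2,\dots$ and $w(t_1,\dots,t_n,\mathsf e_{n+1},\mathsf e_{n+2},\dots)$ for $w\in\tau\cup X$, $n\ge0$, $t_i\in T_\tau(X)$; it carries the structure of the free clone $\tau$-algebra $\mathcal T_\tau(X)$ over $X$ (each $x\in X$ identified with $x(\mathsf e_1,\mathsf e_2,\dots)$), with $q_n$ acting as simultaneous substitution of the $i$-th argument for $\mathsf e_i$, $i\le n$. A homomorphism of clone $\tau$-algebras $\alpha:\mathcal T_\tau(X)\to\mathbf A^{(\mathsf a)}$ is weak if $\alpha(x)$ is a constant map for every $x\in X$, and strong if $\alpha(x)$ is semiconstant for every $x\in X$, where $\varphi:\mathsf a\to A$ is semiconstant if $r\equiv_{\mathbb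 N}s$ implies $\varphi(r)=\varphi(s)$ for $r,s\in\mathsf a$. *)

theory Defs
  imports "HOL-Library.FuncSet"
begin

(* Convention: indices are shifted to start at 0.  A thread s :: nat \<Rightarrow> 'a has
   paper-entry s_(i+1) = s i; the projection e_(i+1) is E i; the (i+1)-th argument
   of a hyperterm w(t_1,t_2,...) is f i. *)

definition fin_diff :: "(nat \<Rightarrow> 'a) \<Rightarrow> (nat \<Rightarrow> 'a) \<Rightarrow> bool" where
  "fin_diff r s \<longleftrightarrow> finite {i. r i \<noteq> s i}"

definition is_trace :: "(nat \<Rightarrow> 'a) set \<Rightarrow> bool" where
  "is_trace a \<longleftrightarrow> a \<noteq> {} \<and> (\<forall>r s. r \<in> a \<longrightarrow> fin_diff r s \<longrightarrow> s \<in> a)"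

definition thread_upd :: "(nat \<Rightarrow> 'a) \<Rightarrow> 'a list \<Rightarrow> nat \<Rightarrow> 'a" where
  "thread_upd r xs = (\<lambda>i. if i < length xs then xs ! i else r i)"

datatype ('s, 'x) hterm = E nat | App "'s + 'x" "nat \<Rightarrow> ('s, 'x) hterm"

inductive_set hterms :: "'s set \<Rightarrow> 'x set \<Rightarrow> ('s, 'x) hterm set" for tau X where
  proj: "E i \<in> hterms tau X"
| app: "\<lbrakk> w \<in> Inl ` tau \<union> Inr ` X; \<And>i. f i \<in> hterms tau X;
          finite {i. f i \<noteq> E i} \<rbrakk> \<Longrightarrow> App w f \<in> hterms tau X"

primrec hsubst :: "(nat \<Rightarrow> ('s, 'x) hterm) \<Rightarrow> ('s, 'x) hterm \<Rightarrow> ('s, 'x) hterm" where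
  "hsubst g (E i) = g i"
| "hsubst g (App w f) = App w (\<lambda>i. hsubst g (f i))"

(* operation q_n of the free clone algebra T_tau(X): n = length ts *)
definition tq :: "('s, 'x) hterm \<Rightarrow> ('s, 'x) hterm list \<Rightarrow> ('s, 'x) hterm" where
  "tq t ts = hsubst (\<lambda>i. if i < length ts then ts ! i else E i) t"

definition tsym :: "('s + 'x) \<Rightarrow> ('s, 'x) hterm" where
  "tsym w = App w E"

(* full functional clone tau-algebra A^(a): universe a \<rightarrow>\<^sub>E UNIV *)
definition fproj :: "(nat \<Rightarrow> 'a) set \<Rightarrow> nat \<Rightarrow> (nat \<Rightarrow> 'a) \<Rightarrow> 'a" where
  "fproj a i = restrict (\<lambda>s. s i) a"

definition fq :: "(nat \<Rightarrow> 'a) set \<Rightarrow> ((nat \<Rightarrow> 'a) \<Rightarrow> 'a) \<Rightarrow> ((nat \<Rightarrow> 'a) \<Rightarrow> 'a) list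
                   \<Rightarrow> (nat \<Rightarrow> 'a) \<Rightarrow> 'a" where
  "fq a \<phi> \<psi>s = restrict (\<lambda>s. \<phi> (thread_upd s (map (\<lambda>\<psi>. \<psi> s) \<psi>s))) a"

(* homomorphism of clone tau-algebras T_tau(X) \<rightarrow> A^(a), where the t-algebra A
   has carrier UNIV::'a, trace a, and sigma^A = ops sigma restricted to a *)
definition clone_hom ::
  "'s set \<Rightarrow> 'x set \<Rightarrow> (nat \<Rightarrow> 'a) set \<Rightarrow> ('s \<Rightarrow> (nat \<Rightarrow> 'a) \<Rightarrow> 'a)
     \<Rightarrow> (('s, 'x) hterm \<Rightarrow> (nat \<Rightarrow> 'a) \<Rightarrow> 'a) \<Rightarrow> bool" where
  "clone_hom tau X a ops \<alpha> \<longleftrightarrow>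
     (\<forall>t \<in> hterms tau X. \<alpha> t \<in> a \<rightarrow>\<^sub>E UNIV) \<and>
     (\<forall>i. \<alpha> (E i) = fproj a i) \<and>
     (\<forall>\<sigma> \<in> tau. \<alpha> (tsym (Inl \<sigma>)) = restrict (ops \<sigma>) a) \<and>
     (\<forall>t ts. t \<in> hterms tau X \<longrightarrow> set ts \<subseteq> hterms tau X \<longrightarrow>
        \<alpha> (tq t ts) = fq a (\<alpha> t) (map \<alpha> ts))"

definition constant_on :: "(nat \<Rightarrow> 'a) set \<Rightarrow> ((nat \<Rightarrow> 'a) \<Rightarrow> 'a) \<Rightarrow> bool" where
  "constant_on a \<phi> \<longleftrightarrow> (\<exists>c. \<forall>s \<in> a. \<phi> s = c)"

definition semiconstant :: "(nat \<Rightarrow> 'a) set \<Rightarrow> ((nat \<Rightarrow> 'a) \<Rightarrow> 'a) \<Rightarrow> bool" where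
  "semiconstant a \<phi> \<longleftrightarrow> (\<forall>r \<in> a. \<forall>s \<in> a. fin_diff r s \<longrightarrow> \<phi> r = \<phi> s)"

definition weak_hom where
  "weak_hom tau X a ops \<alpha> \<longleftrightarrow> clone_hom tau X a ops \<alpha> \<and>
     (\<forall>x \<in> X. constant_on a (\<alpha> (tsym (Inr x))))"

definition strong_hom where
  "strong_hom tau X a ops \<alpha> \<longleftrightarrow> clone_hom tau X a ops \<alpha> \<and>
     (\<forall>x \<in> X. semiconstant a (\<alpha> (tsym (Inr x))))"

end

theory Submission
  imports Defs
begin

primrec ev :: "('s + 'x \<Rightarrow> (nat \<Rightarrow> 'a) \<Rightarrow> 'a) \<Rightarrow> ('s, 'x) hterm \<Rightarrow> (nat \<Rightarrow> 'a) \<Rightarrow> 'a" where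
  "ev G (E i) = (\<lambda>s. s i)"
| "ev G (App w f) = (\<lambda>s. G w (\<lambda>i. ev G (f i) s))"

lemma fin_diff_trans: "fin_diff r s \<Longrightarrow> fin_diff s t \<Longrightarrow> fin_diff r t"
  unfolding fin_diff_def
  by (rule finite_subset[of _ "{i. r i \<noteq> s i} \<union> {i. s i \<noteq> t i}"]) auto

lemma fin_diff_sym: "fin_diff r s \<Longrightarrow> fin_diff s r"
  unfolding fin_diff_def by (metis (mono_tags) Collect_cong)

lemma fin_diff_upd: "fin_diff s (thread_upd s xs)"
  unfolding fin_diff_def thread_upd_def
  by (rule finite_subset[of _ "{..<length xs}"]) auto

lemma ev_subst: "ev G (hsubst g t) s = ev G t (\<lambda>i. ev G (g i) s)"
  by (induction t arbitrary: s) auto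

lemma fin_diff_app:
  assumes "finite {i. f i \<noteq> E i}"
  shows "fin_diff s (\<lambda>i. ev G (f i) s)"
  unfolding fin_diff_def
  by (rule finite_subset[OF _ assms]) (auto)

lemma hom_ev:
  assumes tr: "is_trace a" and h: "clone_hom tau X a ops \<beta>"
    and t: "t \<in> hterms tau X"
  shows "\<forall>s \<in> a. \<beta> t s = ev (\<lambda>w. \<beta> (tsym w)) t s"
  using t
proof (induction t rule: hterms.induct)
  case (proj i)
  then show ?case using h by (auto simp: clone_hom_def fproj_def)
next
  case (app w f)
  obtain n where n: "\<forall>i\<ge>n. f i = E i"
  proof -
    have "finite {i. f i \<noteq> E i}" by fact
    then obtain n where "\<forall>i\<in>{i. f i \<noteq> E i}. i < n"
      using finite_nat_set_iff_bounded by blast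
    then show ?thesis using that by (meson linorder_not_le mem_Collect_eq)
  qed
  define ts where "ts = map f [0..<n]"
  have tsym_in: "tsym w \<in> hterms tau X"
    unfolding tsym_def using app.hyps(1) by (intro hterms.app) (auto intro: hterms.proj)
  have eq: "tq (tsym w) ts = App w f"
    unfolding tq_def tsym_def ts_def using n by (auto intro!: ext)
  have setts: "set ts \<subseteq> hterms tau X" unfolding ts_def using app.hyps(2) by auto
  have hq: "\<beta> (App w f) = fq a (\<beta> (tsym w)) (map \<beta> ts)"
    using h tsym_in setts eq unfolding clone_hom_def by metis
  show ?case
  proof
    fix s assume s: "s \<in> a"
    have th: "thread_upd s (map (\<lambda>\<psi>. \<psi> s) (map \<beta> ts)) = (\<lambda>i. \<beta> (f i) s)"
    proof
      fix i show "thread_upd s (map (\<lambda>\<psi>. \<psi> s) (map \<beta> ts)) i = \<beta> (f i) s"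
      proof (cases "i < n")
        case True then show ?thesis by (simp add: thread_upd_def ts_def)
      next
        case False
        then have "f i = E i" using n by auto
        then have "\<beta> (f i) s = s i" using h s by (auto simp: clone_hom_def fproj_def)
        then show ?thesis using False by (simp add: thread_upd_def ts_def)
      qed
    qed
    have "\<beta> (App w f) s = \<beta> (tsym w) (\<lambda>i. \<beta> (f i) s)"
      using hq s th by (simp add: fq_def)
    also have "(\<lambda>i. \<beta> (f i) s) = (\<lambda>i. ev (\<lambda>w. \<beta> (tsym w)) (f i) s)"
      using app.IH s by auto
    finally show "\<beta> (App w f) s = ev (\<lambda>w. \<beta> (tsym w)) (App w f) s" by simp
  qed
qed

definition Gw where
  "Gw ops c = (\<lambda>w. case w of Inl \<sigma> \<Rightarrow> ops \<sigma> | Inr x \<Rightarrow> (\<lambda>_. c x))"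

lemma weak_exists:
  assumes tr: "is_trace a"
  shows "weak_hom tau X a ops (\<lambda>t. restrict (ev (Gw ops c) t) a)"
proof -
  let ?G = "Gw ops c"
  let ?\<alpha> = "\<lambda>t. restrict (ev ?G t) a"
  have upd_in: "thread_upd s xs \<in> a" if "s \<in> a" for s and xs :: "'a list"
    using tr that fin_diff_upd unfolding is_trace_def by blast
  have q: "?\<alpha> (tq t ts) = fq a (?\<alpha> t) (map ?\<alpha> ts)" for t ts
  proof
    fix s show "?\<alpha> (tq t ts) s = fq a (?\<alpha> t) (map ?\<alpha> ts) s"
    proof (cases "s \<in> a")
      case True
      have th: "(\<lambda>i. ev ?G (if i < length ts then ts ! i else E i) s)
              = thread_upd s (map (\<lambda>\<psi>. \<psi> s) (map ?\<alpha> ts))"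
        using True by (auto simp: thread_upd_def intro!: ext)
      show ?thesis using True upd_in[OF True]
        by (simp add: tq_def fq_def ev_subst th)
    qed (simp add: fq_def)
  qed
  show ?thesis
    unfolding weak_hom_def clone_hom_def
    apply (intro conjI ballI allI impI)
        apply (simp add: fproj_def)
       apply (simp add: fproj_def)
      apply (simp add: tsym_def Gw_def)
     apply (rule q)
    apply (auto simp: tsym_def Gw_def constant_on_def)
    done
qed

theorem mainTheorem2:
  fixes tau :: "'s set" and X :: "'x set"
    and a :: "(nat \<Rightarrow> 'a) set" and ops :: "'s \<Rightarrow> (nat \<Rightarrow> 'a) \<Rightarrow> 'a"
    and u1 u2 :: "('s, 'x) hterm"
  assumes "is_trace a"
    and "u1 \<in> hterms tau X" and "u2 \<in> hterms tau X"
  shows "(\<forall>\<alpha>. weak_hom tau X a ops \<alpha> \<longrightarrow> \<alpha> u1 = \<alpha> u2) \<longleftrightarrow>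
         (\<forall>\<beta>. strong_hom tau X a ops \<beta> \<longrightarrow> \<beta> u1 = \<beta> u2)"
proof
  assume "\<forall>\<beta>. strong_hom tau X a ops \<beta> \<longrightarrow> \<beta> u1 = \<beta> u2"
  moreover have "weak_hom tau X a ops \<alpha> \<Longrightarrow> strong_hom tau X a ops \<alpha>" for \<alpha>
    unfolding weak_hom_def strong_hom_def constant_on_def semiconstant_def by metis
  ultimately show "\<forall>\<alpha>. weak_hom tau X a ops \<alpha> \<longrightarrow> \<alpha> u1 = \<alpha> u2" by blast
next
  assume W: "\<forall>\<alpha>. weak_hom tau X a ops \<alpha> \<longrightarrow> \<alpha> u1 = \<alpha> u2"
  show "\<forall>\<beta>. strong_hom tau X a ops \<beta> \<longrightarrow> \<beta> u1 = \<beta> u2"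
  proof (intro allI impI)
    fix \<beta> assume sh: "strong_hom tau X a ops \<beta>"
    have h: "clone_hom tau X a ops \<beta>" using sh by (simp add: strong_hom_def)
    have semi: "\<forall>x\<in>X. semiconstant a (\<beta> (tsym (Inr x)))" using sh by (simp add: strong_hom_def)
    let ?Gb = "\<lambda>w. \<beta> (tsym w)"
    have agree: "\<beta> u s0 = ev ?Gb u s0 \<and>
        (\<forall>s. s \<in> a \<longrightarrow> fin_diff s0 s \<longrightarrow> ev (Gw ops (\<lambda>x. \<beta> (tsym (Inr x)) s0)) u s = ev ?Gb u s)"
      if s0: "s0 \<in> a" and u: "u \<in> hterms tau X" for s0 u
    proof
      show "\<beta> u s0 = ev ?Gb u s0" using hom_ev[OF assms(1) h u] s0 by blast
      let ?G = "Gw ops (\<lambda>x. \<beta> (tsym (Inr x)) s0)"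
      show "\<forall>s. s \<in> a \<longrightarrow> fin_diff s0 s \<longrightarrow> ev ?G u s = ev ?Gb u s"
        using u
      proof (induction u rule: hterms.induct)
        case (proj i) then show ?case by simp
      next
        case (app w f)
        show ?case
        proof (intro allI impI)
          fix s assume s: "s \<in> a" and fd: "fin_diff s0 s"
          have eqt: "(\<lambda>i. ev ?G (f i) s) = (\<lambda>i. ev ?Gb (f i) s)"
            using app.IH s fd by auto
          have fd2: "fin_diff s (\<lambda>i. ev ?Gb (f i) s)" by (rule fin_diff_app[OF app.hyps(3)])
          have tin: "(\<lambda>i. ev ?Gb (f i) s) \<in> a"
            using assms(1) s fd2 unfolding is_trace_def by blast
          have "?G w (\<lambda>i. ev ?Gb (f i) s) = ?Gb w (\<lambda>i. ev ?Gb (f i) s)"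
          proof (cases w)
            case (Inl \<sigma>)
            then have "\<sigma> \<in> tau" using app.hyps(1) by auto
            then show ?thesis using Inl h tin by (auto simp: Gw_def clone_hom_def)
          next
            case (Inr x)
            then have "x \<in> X" using app.hyps(1) by auto
            then have "semiconstant a (\<beta> (tsym (Inr x)))" using semi by blast
            moreover have "fin_diff s0 (\<lambda>i. ev ?Gb (f i) s)" using fin_diff_trans[OF fd fd2] .
            ultimately show ?thesis using Inr s0 tin by (auto simp: Gw_def semiconstant_def)
          qed
          then show "ev ?G (App w f) s = ev ?Gb (App w f) s" using eqt by simp
        qed
      qed
    qed
    show "\<beta> u1 = \<beta> u2"
    proof
      fix s0 show "\<beta> u1 s0 = \<beta> u2 s0"
      proof (cases "s0 \<in> a")
        case False
        have "\<beta> u1 \<in> a \<rightarrow>\<^sub>E UNIV" "\<beta> u2 \<in> a \<rightarrow>\<^sub>E UNIV" using h assms(2,3) by (auto simp: clone_hom_def)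
        then show ?thesis using False by (auto simp: PiE_def extensional_def)
      next
        case True
        let ?c = "\<lambda>x. \<beta> (tsym (Inr x)) s0"
        have wh: "weak_hom tau X a ops (\<lambda>t. restrict (ev (Gw ops ?c) t) a)"
          by (rule weak_exists[OF assms(1)])
        have "restrict (ev (Gw ops ?c) u1) a = restrict (ev (Gw ops ?c) u2) a"
          using mp[OF spec[OF W, of "\<lambda>t. restrict (ev (Gw ops ?c) t) a"] wh] by simp
        then have "restrict (ev (Gw ops ?c) u1) a s0 = restrict (ev (Gw ops ?c) u2) a s0"
          by simp
        then have e: "ev (Gw ops ?c) u1 s0 = ev (Gw ops ?c) u2 s0" using True
          by simp
        have fd0: "fin_diff s0 s0" by (simp add: fin_diff_def)
        have "\<beta> u1 s0 = ev (Gw ops ?c) u1 s0"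
          using agree[OF True assms(2)] True fd0 by simp
        moreover have "\<beta> u2 s0 = ev (Gw ops ?c) u2 s0"
          using agree[OF True assms(3)] True fd0 by simp
        ultimately show ?thesis using e by simp
      qed
    qed
  qed
qed

end
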